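(* Let $N=M=1$ (one input, one output). Suppose the production possibility set $T$ generated by the DMUs' data has $\phi>2$ extreme points $(x^1,y^1),\dots,(x^\phi,y^\phi)$, ordered so that $x^1<\dots<x^\phi$ and $y^1<\dots<y^\phi$. Let DMU $\hat\imath$ have data $(x^{\hat\imath},y^{\hat\imath})$. For $\sigma\ge0$ define the virtual point $v(\sigma)=(x^{\hat\imath}-\sigma,\,y^{\hat\imath}+\sigma)$ and the translated lines: $EF_{k,k+1}(\sigma)$, the straight line through $(x^k+\sigma,y^k-\sigma)$ and $(x^{k+1}+\sigma,y^{k+1}-\sigma)$ for $k=1,\dots,\phi-1$; $EF_1(\sigma)$, the vertical line $x=x^1+\sigma$; and $EF_\phi(\sigma)$, the horizontal line $y=y^\phi-\sigma$. For each such family $L$ let the amount of uncertainty required for $L$ be the least $\sigma\ge0$ with $v(\sigma)\in L(\sigma)$ (infinite if none exists). Then the line of the efficient frontier requiring the minimum amount of uncertainty for DMU $\hat\imath$ is determined as follows: if $y^{\hat\imath}+x^{\hat\imath}\le y^1+x^1$ it is $EF_1$; if $y^k+x^k\le y^{\hat\imath}+x^{\hat\imath}\le y^{k+1}+x^{k+1}$ for some $k\in\{1,\dots,\phi-1\}$ it is $EF_{k,k+1}$; if $y^\phi+x^\phi\le y^{\hat\imath}+x^{\hat\imath}$ it is $EF_\phi$.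
   Context: DEA setting: $I$ DMUs with nonnegative input data $X\in\mathbb{R}^{N\times I}$ and output data $Y\in\mathbb{R}^{M\times I}$ (column $i$ gives $(x^i,y^i)$). The (variable returns to scale) production possibility set is $T=\{(x,y): x\ge X\lambda,\ y\le Y\lambda,\ e^T\lambda=1,\ \lambda\ge0\}$. DMU $\hat\imath$ is the (inefficient) DMU under consideration. Under box uncertainty of size $\sigma$, the favourable realisation moves DMU $\hat\imath$ to $(x^{\hat\imath}-\sigma,y^{\hat\imath}+\sigma)$ and every other DMU $i$ to $(x^i+\sigma,y^i-\sigma)$, so the frontier lines are translated by $(\sigma,-\sigma)$. *)

theory Defs
  imports "HOL-Analysis.Analysis"
begin

text \<open>VRS production possibility set for one input and one output.
  DMUs are indexed by the finite set D; x i is the input, y i the output of DMU i.\<close>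
definition ppsT :: "'i set \<Rightarrow> ('i \<Rightarrow> real) \<Rightarrow> ('i \<Rightarrow> real) \<Rightarrow> (real \<times> real) set" where
  "ppsT D x y = {(a, b). \<exists>l::'i \<Rightarrow> real. (\<forall>i\<in>D. l i \<ge> 0) \<and> (\<Sum>i\<in>D. l i) = 1 \<and>
       a \<ge> (\<Sum>i\<in>D. l i * x i) \<and> b \<le> (\<Sum>i\<in>D. l i * y i)}"

definition vpt :: "real \<Rightarrow> real \<Rightarrow> real \<Rightarrow> real \<times> real" where
  "vpt xh yh \<sigma> = (xh - \<sigma>, yh + \<sigma>)"

definition shiftp :: "real \<Rightarrow> real \<times> real \<Rightarrow> real \<times> real" where
  "shiftp \<sigma> p = (fst p + \<sigma>, snd p - \<sigma>)"

definition EF_seg :: "real \<times> real \<Rightarrow> real \<times> real \<Rightarrow> real \<Rightarrow> (real \<times> real) set" where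
  "EF_seg p q \<sigma> = affine hull {shiftp \<sigma> p, shiftp \<sigma> q}"

definition EF_first :: "real \<times> real \<Rightarrow> real \<Rightarrow> (real \<times> real) set" where
  "EF_first p \<sigma> = {z. fst z = fst p + \<sigma>}"

definition EF_last :: "real \<times> real \<Rightarrow> real \<Rightarrow> (real \<times> real) set" where
  "EF_last p \<sigma> = {z. snd z = snd p - \<sigma>}"

text \<open>Amount of uncertainty required for a line family L: the least sigma \<ge> 0 with
  v(sigma) in L(sigma), infinite if there is none (Inf of the empty set of ereals is \<infinity>).\<close>
definition req_unc :: "real \<Rightarrow> real \<Rightarrow> (real \<Rightarrow> (real \<times> real) set) \<Rightarrow> ereal" where
  "req_unc xh yh L = Inf (ereal ` {\<sigma>. \<sigma> \<ge> 0 \<and> vpt xh yh \<sigma> \<in> L \<sigma>})"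

definition frontier_lines :: "(nat \<Rightarrow> real \<times> real) \<Rightarrow> nat \<Rightarrow> (real \<Rightarrow> (real \<times> real) set) set" where
  "frontier_lines e \<phi> = {EF_first (e 1), EF_last (e \<phi>)} \<union> {EF_seg (e k) (e (Suc k)) | k. 1 \<le> k \<and> k < \<phi>}"

end

theory Submission imports Defs begin

lemma pps_mono:
  assumes "(a, b) \<in> ppsT D x y" "a \<le> a'" "b' \<le> b"
  shows "(a', b') \<in> ppsT D x y"
  using assms unfolding ppsT_def by (smt (verit) case_prodD case_prodI mem_Collect_eq)

lemma pps_data:
  assumes "finite D" "i \<in> D"
  shows "(x i, y i) \<in> ppsT D x y"
proof -
  let ?l = "\<lambda>j. if j = i then 1 else (0::real)"
  have "(\<Sum>j\<in>D. ?l j) = 1" using assms by (simp add: sum.delta)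
  moreover have "(\<Sum>j\<in>D. ?l j * x j) = (\<Sum>j\<in>D. if j = i then x j else 0)"
    "(\<Sum>j\<in>D. ?l j * y j) = (\<Sum>j\<in>D. if j = i then y j else 0)"
    by (auto intro!: sum.cong)
  moreover have "(\<Sum>j\<in>D. if j = i then x j else 0) = x i" "(\<Sum>j\<in>D. if j = i then y j else 0) = y i"
    using assms by (simp_all add: sum.delta)
  ultimately show ?thesis unfolding ppsT_def by (auto intro!: exI[of _ ?l])
qed

lemma pps_convex: "convex (ppsT D x y)"
  unfolding convex_def
proof (intro ballI allI impI)
  fix p q :: "real \<times> real" and u v :: real
  assume p: "p \<in> ppsT D x y" and q: "q \<in> ppsT D x y" and uv: "0 \<le> u" "0 \<le> v" "u + v = 1"
  obtain l1 where l1: "\<forall>i\<in>D. l1 i \<ge> 0" "(\<Sum>i\<in>D. l1 i) = 1"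
     "fst p \<ge> (\<Sum>i\<in>D. l1 i * x i)" "snd p \<le> (\<Sum>i\<in>D. l1 i * y i)"
    using p unfolding ppsT_def by (cases p) auto
  obtain l2 where l2: "\<forall>i\<in>D. l2 i \<ge> 0" "(\<Sum>i\<in>D. l2 i) = 1"
     "fst q \<ge> (\<Sum>i\<in>D. l2 i * x i)" "snd q \<le> (\<Sum>i\<in>D. l2 i * y i)"
    using q unfolding ppsT_def by (cases q) auto
  define l where "l i = u * l1 i + v * l2 i" for i
  have "\<forall>i\<in>D. l i \<ge> 0" using l1 l2 uv by (simp add: l_def)
  moreover have "(\<Sum>i\<in>D. l i) = 1" using l1 l2 uv
    by (simp add: l_def sum.distrib sum_distrib_left[symmetric])
  moreover have "(\<Sum>i\<in>D. l i * x i) = u * (\<Sum>i\<in>D. l1 i * x i) + v * (\<Sum>i\<in>D. l2 i * x i)"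
    by (simp add: l_def sum.distrib sum_distrib_left algebra_simps)
  moreover have "(\<Sum>i\<in>D. l i * y i) = u * (\<Sum>i\<in>D. l1 i * y i) + v * (\<Sum>i\<in>D. l2 i * y i)"
    by (simp add: l_def sum.distrib sum_distrib_left algebra_simps)
  moreover have "u * (\<Sum>i\<in>D. l1 i * x i) + v * (\<Sum>i\<in>D. l2 i * x i) \<le> u * fst p + v * fst q"
    using l1 l2 uv by (simp add: add_mono mult_left_mono)
  moreover have "u * snd p + v * snd q \<le> u * (\<Sum>i\<in>D. l1 i * y i) + v * (\<Sum>i\<in>D. l2 i * y i)"
    using l1 l2 uv by (simp add: add_mono mult_left_mono)
  ultimately show "u *\<^sub>R p + v *\<^sub>R q \<in> ppsT D x y"
    unfolding ppsT_def by (cases p, cases q) (auto intro!: exI[of _ l])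
qed


lemma wsum_bound:
  fixes l f :: "'i \<Rightarrow> real"
  assumes "finite D" "\<forall>i\<in>D. l i \<ge> 0" "\<forall>i\<in>D. 0 < l i \<longrightarrow> f i \<le> c" "sum l D = 1"
  shows "(\<Sum>i\<in>D. l i * f i) \<le> c"
proof -
  have nn: "\<forall>i\<in>D. l i * (c - f i) \<ge> 0"
  proof
    fix i assume i: "i \<in> D"
    show "l i * (c - f i) \<ge> 0"
    proof (cases "l i = 0")
      case False
      hence "0 < l i" using assms(2) i by force
      thus ?thesis using assms(3) i by simp
    qed simp
  qed
  have "(\<Sum>i\<in>D. l i * (c - f i)) \<ge> 0"
    using nn by (intro sum_nonneg) auto
  moreover have "(\<Sum>i\<in>D. l i * (c - f i)) = c - (\<Sum>i\<in>D. l i * f i)"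
    using assms by (simp add: right_diff_distrib sum_subtractf sum_distrib_right[symmetric])
  ultimately show ?thesis by simp
qed

lemma wsum_conc:
  fixes l f :: "'i \<Rightarrow> real"
  assumes "finite D" "\<forall>i\<in>D. l i \<ge> 0" "\<forall>i\<in>D. 0 < l i \<longrightarrow> f i \<le> c" "sum l D = 1"
    "c \<le> (\<Sum>i\<in>D. l i * f i)"
  shows "\<forall>i\<in>D. 0 < l i \<longrightarrow> f i = c"
proof -
  have nn: "\<forall>i\<in>D. l i * (c - f i) \<ge> 0"
  proof
    fix i assume i: "i \<in> D"
    show "l i * (c - f i) \<ge> 0"
    proof (cases "l i = 0")
      case False
      hence "0 < l i" using assms(2) i by force
      thus ?thesis using assms(3) i by simp
    qed simp
  qed
  have "(\<Sum>i\<in>D. l i * (c - f i)) = c - (\<Sum>i\<in>D. l i * f i)"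
    using assms by (simp add: right_diff_distrib sum_subtractf sum_distrib_right[symmetric])
  hence "(\<Sum>i\<in>D. l i * (c - f i)) = 0" using nn assms(5) sum_nonneg[of D "\<lambda>i. l i * (c - f i)"] by simp
  hence "\<forall>i\<in>D. l i * (c - f i) = 0" using nn by (subst (asm) sum_nonneg_eq_0_iff[OF assms(1)]) auto
  thus ?thesis by auto
qed

lemma avg_eq:
  fixes A B c t :: real
  assumes "0 < t" "t < 1" "A \<le> c" "B \<le> c" "(1 - t) * A + t * B = c"
  shows "A = c \<and> B = c"
proof -
  have "(1 - t) * (c - A) \<ge> 0" "t * (c - B) \<ge> 0" using assms by simp_all
  moreover have "(1 - t) * (c - A) + t * (c - B) = 0" using assms(5) by (simp add: algebra_simps)
  ultimately have "(1 - t) * (c - A) = 0" "t * (c - B) = 0" by linarith+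
  thus ?thesis using assms by simp
qed



lemma pps_max:
  fixes D :: "'i set" and x y :: "'i \<Rightarrow> real" and \<alpha> \<beta> :: real
  assumes fin: "finite D" and ne: "D \<noteq> {}" and al: "\<alpha> \<le> 0" and be: "\<beta> \<ge> 0"
  shows "\<exists>q. q extreme_point_of ppsT D x y \<and>
     (\<forall>p\<in>ppsT D x y. \<alpha> * fst p + \<beta> * snd p \<le> \<alpha> * fst q + \<beta> * snd q)"
proof -
  define h where "h i = \<alpha> * x i + \<beta> * y i" for i
  define H where "H = Max (h ` D)"
  define M where "M = {i\<in>D. h i = H}"
  have hle: "\<forall>i\<in>D. h i \<le> H" using fin by (simp add: H_def)
  have "H \<in> h ` D" using fin ne unfolding H_def by (intro Max_in) auto
  hence M: "finite M" "M \<noteq> {}" using fin by (auto simp: M_def)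
  define m where "m = Min (x ` M)"
  define M2 where "M2 = {i\<in>M. x i = m}"
  have mle: "\<forall>i\<in>M. m \<le> x i" using M by (simp add: m_def)
  have "m \<in> x ` M" using M unfolding m_def by (intro Min_in) auto
  hence M2: "finite M2" "M2 \<noteq> {}" using M by (auto simp: M2_def)
  define Y where "Y = Max (y ` M2)"
  have Yle: "\<forall>i\<in>M2. y i \<le> Y" using M2 by (simp add: Y_def)
  have "Y \<in> y ` M2" using M2 unfolding Y_def by (intro Max_in) auto
  then obtain i0 where i0: "i0 \<in> M2" "y i0 = Y" by auto
  have i0D: "i0 \<in> D" "h i0 = H" "x i0 = m" using i0 by (auto simp: M2_def M_def)
  have lin: "\<alpha> * a + \<beta> * b \<le> (\<Sum>i\<in>D. l i * h i)"
    if "a \<ge> (\<Sum>i\<in>D. l i * x i)" "b \<le> (\<Sum>i\<in>D. l i * y i)" for a b and l :: "'i \<Rightarrow> real"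
  proof -
    have "\<alpha> * a \<le> \<alpha> * (\<Sum>i\<in>D. l i * x i)" using that al by (simp add: mult_left_mono_neg)
    moreover have "\<beta> * b \<le> \<beta> * (\<Sum>i\<in>D. l i * y i)" using that be by (simp add: mult_left_mono)
    moreover have "\<alpha> * (\<Sum>i\<in>D. l i * x i) + \<beta> * (\<Sum>i\<in>D. l i * y i) = (\<Sum>i\<in>D. l i * h i)"
      by (simp add: h_def sum_distrib_left sum.distrib[symmetric] algebra_simps)
    ultimately show ?thesis by linarith
  qed
  have bnd: "\<alpha> * fst p + \<beta> * snd p \<le> H" if pT: "p \<in> ppsT D x y" for p
  proof -
    obtain l where l: "\<forall>i\<in>D. l i \<ge> 0" "(\<Sum>i\<in>D. l i) = 1"
     "fst p \<ge> (\<Sum>i\<in>D. l i * x i)" "snd p \<le> (\<Sum>i\<in>D. l i * y i)"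
      using pT unfolding ppsT_def by (cases p) auto
    have "(\<Sum>i\<in>D. l i * h i) \<le> H" using wsum_bound[OF fin l(1) _ l(2), of h H] hle by blast
    thus ?thesis using lin[OF l(3,4)] by linarith
  qed
  have key: "m \<le> fst p \<and> (fst p \<le> m \<longrightarrow> snd p \<le> Y)"
    if pT: "p \<in> ppsT D x y" and "\<alpha> * fst p + \<beta> * snd p \<ge> H" for p
  proof -
    obtain l where l: "\<forall>i\<in>D. l i \<ge> 0" "(\<Sum>i\<in>D. l i) = 1"
     "fst p \<ge> (\<Sum>i\<in>D. l i * x i)" "snd p \<le> (\<Sum>i\<in>D. l i * y i)"
      using pT unfolding ppsT_def by (cases p) auto
    have "H \<le> (\<Sum>i\<in>D. l i * h i)" using lin[OF l(3,4)] that(2) by linarith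
    hence c1: "\<forall>i\<in>D. 0 < l i \<longrightarrow> h i = H" using wsum_conc[OF fin l(1) _ l(2), of h H] hle by blast
    hence c1': "\<forall>i\<in>D. 0 < l i \<longrightarrow> - x i \<le> - m" using mle by (auto simp: M_def)
    have s1: "(\<Sum>i\<in>D. l i * (- x i)) = - (\<Sum>i\<in>D. l i * x i)" by (simp add: sum_negf)
    have "(\<Sum>i\<in>D. l i * (- x i)) \<le> - m" using wsum_bound[OF fin l(1) c1' l(2)] .
    hence A: "m \<le> fst p" using s1 l(3) by linarith
    moreover have "snd p \<le> Y" if "fst p \<le> m"
    proof -
      have "- m \<le> (\<Sum>i\<in>D. l i * (- x i))" using s1 l(3) that by linarith
      hence "\<forall>i\<in>D. 0 < l i \<longrightarrow> - x i = - m" using wsum_conc[OF fin l(1) c1' l(2)] by blast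
      hence "\<forall>i\<in>D. 0 < l i \<longrightarrow> y i \<le> Y" using c1 Yle by (auto simp: M2_def M_def)
      hence "(\<Sum>i\<in>D. l i * y i) \<le> Y" using wsum_bound[OF fin l(1) _ l(2)] by blast
      thus ?thesis using l(4) by linarith
    qed
    ultimately show ?thesis by blast
  qed
  define q where "q = (x i0, y i0)"
  have qT: "q \<in> ppsT D x y" using pps_data[OF fin i0D(1)] by (simp add: q_def)
  have "q extreme_point_of ppsT D x y"
    unfolding extreme_point_of_def
  proof (intro conjI qT ballI notI)
    fix u v assume u: "u \<in> ppsT D x y" and v: "v \<in> ppsT D x y" and qs: "q \<in> open_segment u v"
    then obtain t where t: "u \<noteq> v" "0 < t" "t < 1" "q = (1 - t) *\<^sub>R u + t *\<^sub>R v"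
      by (auto simp: in_segment)
    have q1: "x i0 = (1 - t) * fst u + t * fst v" and q2: "y i0 = (1 - t) * snd u + t * snd v"
      using t(4) by (simp_all add: q_def prod_eq_iff)
    have "(1 - t) * (\<alpha> * fst u + \<beta> * snd u) + t * (\<alpha> * fst v + \<beta> * snd v) = H"
      using i0D(2) q1 q2 by (simp add: h_def algebra_simps)
    hence hH: "\<alpha> * fst u + \<beta> * snd u = H" "\<alpha> * fst v + \<beta> * snd v = H"
      using avg_eq[OF t(2,3) bnd[OF u] bnd[OF v]] by auto
    have ku: "m \<le> fst u \<and> (fst u \<le> m \<longrightarrow> snd u \<le> Y)" using key[OF u] hH by simp
    have kv: "m \<le> fst v \<and> (fst v \<le> m \<longrightarrow> snd v \<le> Y)" using key[OF v] hH by simp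
    have "(1 - t) * (- fst u) + t * (- fst v) = - m" using q1 i0D(3) by (simp add: algebra_simps)
    hence xs: "fst u = m" "fst v = m" using avg_eq[OF t(2,3), of "- fst u" "- m" "- fst v"] ku kv by auto
    have "snd u = Y" "snd v = Y" using avg_eq[OF t(2,3), of "snd u" Y "snd v"] ku kv xs q2 i0(2) by auto
    thus False using xs t(1) by (simp add: prod_eq_iff)
  qed
  moreover have "\<alpha> * fst q + \<beta> * snd q = H" using i0D(2) by (simp add: q_def h_def)
  ultimately show ?thesis using bnd by metis
qed

lemma ext_dom:
  assumes e: "e extreme_point_of ppsT D x y" and q: "q \<in> ppsT D x y"
    and "fst q \<le> fst e" "snd e \<le> snd q"
  shows "q = e"
proof (rule ccontr)
  assume ne: "q \<noteq> e"
  have eT: "e \<in> ppsT D x y" using e by (simp add: extreme_point_of_def)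
  define r where "r = (2 * fst e - fst q, 2 * snd e - snd q)"
  have rT: "r \<in> ppsT D x y" using pps_mono[of "fst e" "snd e" D x y] eT assms(3,4) by (simp add: r_def)
  have "q \<noteq> r" using ne by (auto simp: r_def prod_eq_iff)
  moreover have "e = (1 - 1/2) *\<^sub>R q + (1/2) *\<^sub>R r" by (simp add: r_def prod_eq_iff field_simps)
  ultimately have "e \<in> open_segment q r" by (auto simp: in_segment intro!: exI[of _ "1/2"])
  thus False using e q rT by (auto simp: extreme_point_of_def)
qed



lemma chain_lt:
  fixes f :: "nat \<Rightarrow> real"
  assumes "\<forall>k. 1 \<le> k \<and> k < \<phi> \<longrightarrow> f k < f (Suc k)" "1 \<le> i" "i < j" "j \<le> \<phi>"
  shows "f i < f j"
  using assms(3,4)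
proof (induction j)
  case 0 thus ?case by simp
next
  case (Suc j)
  show ?case
  proof (cases "i = j")
    case True thus ?thesis using assms(1,2) Suc.prems by auto
  next
    case False
    hence "f i < f j" using Suc by auto
    also have "f j < f (Suc j)" using assms(1,2) Suc.prems False by auto
    finally show ?thesis .
  qed
qed

lemma req_le:
  assumes "\<sigma>0 \<ge> 0" "vpt a b \<sigma>0 \<in> L0 \<sigma>0" "\<And>\<sigma>. \<sigma> \<ge> 0 \<Longrightarrow> vpt a b \<sigma> \<in> L \<sigma> \<Longrightarrow> \<sigma>0 \<le> \<sigma>"
  shows "req_unc a b L0 \<le> req_unc a b L"
proof -
  have "req_unc a b L0 \<le> ereal \<sigma>0" unfolding req_unc_def using assms(1,2) by (intro Inf_lower) auto
  also have "ereal \<sigma>0 \<le> req_unc a b L" unfolding req_unc_def using assms(3) by (intro Inf_greatest) auto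
  finally show ?thesis .
qed

lemma lb_seg:
  fixes P Q :: "real \<times> real"
  assumes "fst P < fst Q" "snd P < snd Q"
   and sup: "(fst Q - fst P) * (b + 2*\<sigma>0) - (snd Q - snd P) * (a - 2*\<sigma>0) \<le> (fst Q - fst P) * snd P - (snd Q - snd P) * fst P"
   and mem: "vpt a b \<sigma> \<in> EF_seg P Q \<sigma>"
  shows "\<sigma>0 \<le> \<sigma>"
proof -
  obtain u v where uv: "u + v = 1" "vpt a b \<sigma> = u *\<^sub>R shiftp \<sigma> P + v *\<^sub>R shiftp \<sigma> Q"
    using mem unfolding EF_seg_def affine_hull_2 by auto
  have e1: "a - \<sigma> = u * (fst P + \<sigma>) + v * (fst Q + \<sigma>)" and e2: "b + \<sigma> = u * (snd P - \<sigma>) + v * (snd Q - \<sigma>)"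
    using uv(2) by (simp_all add: vpt_def shiftp_def prod_eq_iff)
  have v: "v = 1 - u" using uv(1) by simp
  have "(fst Q - fst P) * (b + 2*\<sigma>) - (snd Q - snd P) * (a - 2*\<sigma>) = (fst Q - fst P) * snd P - (snd Q - snd P) * fst P"
  proof -
    have a2: "a - 2*\<sigma> = u * fst P + (1 - u) * fst Q" using e1 v by (simp add: algebra_simps)
    have b2: "b + 2*\<sigma> = u * snd P + (1 - u) * snd Q" using e2 v by (simp add: algebra_simps)
    show ?thesis unfolding a2 b2 by (simp add: algebra_simps)
  qed
  hence "(\<sigma>0 - \<sigma>) * ((fst Q - fst P) + (snd Q - snd P)) \<le> 0" using sup by (simp add: algebra_simps)
  moreover have "(fst Q - fst P) + (snd Q - snd P) > 0" using assms(1,2) by simp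
  ultimately show ?thesis by (simp add: mult_le_0_iff)
qed

lemma lb_all:
  assumes S1: "\<forall>p\<in>ppsT D x y. fst (e 1) \<le> fst p"
    and S2: "\<forall>p\<in>ppsT D x y. snd p \<le> snd (e \<phi>)"
    and S3: "\<And>k. 1 \<le> k \<Longrightarrow> k < \<phi> \<Longrightarrow> \<forall>p\<in>ppsT D x y.
       (fst (e (Suc k)) - fst (e k)) * snd p - (snd (e (Suc k)) - snd (e k)) * fst p
        \<le> (fst (e (Suc k)) - fst (e k)) * snd (e k) - (snd (e (Suc k)) - snd (e k)) * fst (e k)"
    and p0T: "(a - 2*\<sigma>0, b + 2*\<sigma>0) \<in> ppsT D x y"
    and mono: "\<forall>k. 1 \<le> k \<and> k < \<phi> \<longrightarrow> fst (e k) < fst (e (Suc k)) \<and> snd (e k) < snd (e (Suc k))"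
  shows "\<forall>L\<in>frontier_lines e \<phi>. \<forall>\<sigma>. \<sigma> \<ge> 0 \<and> vpt a b \<sigma> \<in> L \<sigma> \<longrightarrow> \<sigma>0 \<le> \<sigma>"
proof (intro ballI allI impI)
  fix L \<sigma> assume L: "L \<in> frontier_lines e \<phi>" and s: "\<sigma> \<ge> 0 \<and> vpt a b \<sigma> \<in> L \<sigma>"
  have f: "fst (e 1) \<le> a - 2*\<sigma>0" using S1 p0T by force
  have l: "b + 2*\<sigma>0 \<le> snd (e \<phi>)" using S2 p0T by force
  consider "L = EF_first (e 1)" | "L = EF_last (e \<phi>)" | k where "1 \<le> k" "k < \<phi>" "L = EF_seg (e k) (e (Suc k))"
    using L unfolding frontier_lines_def by blast
  thus "\<sigma>0 \<le> \<sigma>"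
  proof cases
    case 1 thus ?thesis using s f by (simp add: vpt_def EF_first_def)
  next
    case 2 thus ?thesis using s l by (simp add: vpt_def EF_last_def)
  next
    case 3
    show ?thesis
      by (rule lb_seg[of "e k" "e (Suc k)" b \<sigma>0 a])
        (use mono 3 s S3[OF 3(1,2)] p0T in auto)
  qed
qed



lemma seg_support:
  fixes D :: "'i set" and x y :: "'i \<Rightarrow> real" and e :: "nat \<Rightarrow> real \<times> real"
  assumes fin: "finite D" and ne: "D \<noteq> {}"
    and ext: "\<And>k. k \<in> {1..\<phi>} \<Longrightarrow> e k extreme_point_of ppsT D x y"
    and extE: "\<And>q. q extreme_point_of ppsT D x y \<Longrightarrow> \<exists>j\<in>{1..\<phi>}. q = e j"
    and xlt: "\<And>i j. 1 \<le> i \<Longrightarrow> i < j \<Longrightarrow> j \<le> \<phi> \<Longrightarrow> fst (e i) < fst (e j)"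
    and ylt: "\<And>i j. 1 \<le> i \<Longrightarrow> i < j \<Longrightarrow> j \<le> \<phi> \<Longrightarrow> snd (e i) < snd (e j)"
    and k: "1 \<le> k" "k < \<phi>"
  shows "\<forall>p\<in>ppsT D x y.
       (fst (e (Suc k)) - fst (e k)) * snd p - (snd (e (Suc k)) - snd (e k)) * fst p
        \<le> (fst (e (Suc k)) - fst (e k)) * snd (e k) - (snd (e (Suc k)) - snd (e k)) * fst (e k)"
proof -
  define P where "P = e k"
  define Q where "Q = e (Suc k)"
  define dx where "dx = fst Q - fst P"
  define dy where "dy = snd Q - snd P"
  define h where "h p = dx * snd p - dy * fst p" for p :: "real \<times> real"
  have dx: "dx > 0" using xlt[of k "Suc k"] k by (simp add: dx_def P_def Q_def)
  have dy: "dy > 0" using ylt[of k "Suc k"] k by (simp add: dy_def P_def Q_def)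
  have hQ: "h Q = h P" by (simp add: h_def dx_def dy_def algebra_simps)
  have cvx: "convex (ppsT D x y)" by (rule pps_convex)
  have hlin: "h (t *\<^sub>R A + (1 - t) *\<^sub>R B) = t * h A + (1 - t) * h B" for t A B
    by (simp add: h_def algebra_simps)
  obtain q where q: "q extreme_point_of ppsT D x y" "\<forall>p\<in>ppsT D x y. h p \<le> h q"
    using pps_max[OF fin ne, of "- dy" dx x y] dx dy by (auto simp: h_def)
  obtain j where j: "j \<in> {1..\<phi>}" "q = e j" using extE[OF q(1)] by blast
  have eT: "e i \<in> ppsT D x y" if "i \<in> {1..\<phi>}" for i using ext[OF that] by (simp add: extreme_point_of_def)
  have "h (e j) \<le> h P"
  proof (rule ccontr)
    assume hj: "\<not> h (e j) \<le> h P"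
    have "j \<noteq> k" "j \<noteq> Suc k" using hj hQ by (auto simp: P_def Q_def)
    hence "j < k \<or> Suc k < j" by linarith
    thus False
    proof
      assume jk: "j < k"
      have xj: "fst (e j) < fst P" using xlt[of j k] jk j k by (simp add: P_def)
      have xPQ: "fst P < fst Q" using dx by (simp add: dx_def)
      define t where "t = (fst Q - fst P) / (fst Q - fst (e j))"
      have t: "0 < t" "t \<le> 1" using xj xPQ by (auto simp: t_def)
      define w where "w = t *\<^sub>R e j + (1 - t) *\<^sub>R Q"
      have wT: "w \<in> ppsT D x y" unfolding w_def
        using cvx eT[OF j(1)] eT[of "Suc k"] k t by (intro convexD) (auto simp: Q_def)
      have wx: "fst w = fst P"
      proof -
        have "fst w = fst Q - t * (fst Q - fst (e j))" by (simp add: w_def algebra_simps)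
        also have "t * (fst Q - fst (e j)) = fst Q - fst P" using xj xPQ by (simp add: t_def)
        finally show ?thesis by simp
      qed
      have "h w = t * h (e j) + (1 - t) * h P" unfolding w_def hlin hQ ..
      also have "\<dots> > h P"
      proof -
        have "t * h (e j) > t * h P" using t hj by simp
        thus ?thesis by (simp add: algebra_simps)
      qed
      finally have "dx * snd w > dx * snd P" using wx by (simp add: h_def)
      hence "snd w > snd P" using dx by simp
      moreover have "w = P" using ext_dom[OF ext[of k] wT] wx \<open>snd w > snd P\<close> k by (simp add: P_def)
      ultimately show False by simp
    next
      assume jk: "Suc k < j"
      have xj: "fst Q < fst (e j)" using xlt[of "Suc k" j] jk j k by (simp add: Q_def)
      have xPQ: "fst P < fst Q" using dx by (simp add: dx_def)
      define t where "t = (fst (e j) - fst Q) / (fst (e j) - fst P)"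
      have t: "0 \<le> t" "t < 1" using xj xPQ by (auto simp: t_def)
      define w where "w = t *\<^sub>R P + (1 - t) *\<^sub>R e j"
      have wT: "w \<in> ppsT D x y" unfolding w_def
        using cvx eT[OF j(1)] eT[of k] k t by (intro convexD) (auto simp: P_def)
      have wx: "fst w = fst Q"
      proof -
        have "fst w = fst (e j) - t * (fst (e j) - fst P)" by (simp add: w_def algebra_simps)
        also have "t * (fst (e j) - fst P) = fst (e j) - fst Q" using xj xPQ by (simp add: t_def)
        finally show ?thesis by simp
      qed
      have "h w = t * h P + (1 - t) * h (e j)" unfolding w_def hlin ..
      also have "\<dots> > h Q"
      proof -
        have "(1 - t) * h (e j) > (1 - t) * h P" using t hj by simp
        thus ?thesis using hQ by (simp add: algebra_simps)
      qed
      finally have "dx * snd w > dx * snd Q" using wx by (simp add: h_def)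
      hence "snd w > snd Q" using dx by simp
      moreover have "w = Q" using ext_dom[OF ext[of "Suc k"] wT] wx \<open>snd w > snd Q\<close> k by (simp add: Q_def)
      ultimately show False by simp
    qed
  qed
  thus ?thesis using q(2) j(2) by (auto simp: h_def dx_def dy_def P_def Q_def)
qed



theorem theorem5:
  fixes D :: "'i set" and x y :: "'i \<Rightarrow> real" and ih :: 'i
    and e :: "nat \<Rightarrow> real \<times> real" and \<phi> :: nat
  assumes "finite D"
    and "\<forall>i\<in>D. x i \<ge> 0 \<and> y i \<ge> 0"
    and "ih \<in> D"
    and "\<phi> > 2"
    and "{p. p extreme_point_of ppsT D x y} = e ` {1..\<phi>}"
    and "\<forall>k. 1 \<le> k \<and> k < \<phi> \<longrightarrow> fst (e k) < fst (e (Suc k)) \<and> snd (e k) < snd (e (Suc k))"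
  shows
    "(y ih + x ih \<le> snd (e 1) + fst (e 1) \<longrightarrow>
        (\<forall>L\<in>frontier_lines e \<phi>. req_unc (x ih) (y ih) (EF_first (e 1)) \<le> req_unc (x ih) (y ih) L))
   \<and> (\<forall>k. 1 \<le> k \<and> k < \<phi> \<and> snd (e k) + fst (e k) \<le> y ih + x ih
            \<and> y ih + x ih \<le> snd (e (Suc k)) + fst (e (Suc k)) \<longrightarrow>
        (\<forall>L\<in>frontier_lines e \<phi>. req_unc (x ih) (y ih) (EF_seg (e k) (e (Suc k))) \<le> req_unc (x ih) (y ih) L))
   \<and> (snd (e \<phi>) + fst (e \<phi>) \<le> y ih + x ih \<longrightarrow>
        (\<forall>L\<in>frontier_lines e \<phi>. req_unc (x ih) (y ih) (EF_last (e \<phi>)) \<le> req_unc (x ih) (y ih) L))"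
proof -
  note fin = assms(1) and mono = assms(6)
  define a where "a = x ih"
  define b where "b = y ih"
  have ne: "D \<noteq> {}" using assms(3) by auto
  have ext: "\<And>k. k \<in> {1..\<phi>} \<Longrightarrow> e k extreme_point_of ppsT D x y"
    using assms(5) by blast
  have extE: "\<And>q. q extreme_point_of ppsT D x y \<Longrightarrow> \<exists>j\<in>{1..\<phi>}. q = e j"
    using assms(5) by blast
  have xlt: "\<And>i j. 1 \<le> i \<Longrightarrow> i < j \<Longrightarrow> j \<le> \<phi> \<Longrightarrow> fst (e i) < fst (e j)"
    using chain_lt[of \<phi> "\<lambda>k. fst (e k)"] mono by blast
  have ylt: "\<And>i j. 1 \<le> i \<Longrightarrow> i < j \<Longrightarrow> j \<le> \<phi> \<Longrightarrow> snd (e i) < snd (e j)"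
    using chain_lt[of \<phi> "\<lambda>k. snd (e k)"] mono by blast
  have eT: "e i \<in> ppsT D x y" if "i \<in> {1..\<phi>}" for i using ext[OF that] by (simp add: extreme_point_of_def)
  have abT: "(a, b) \<in> ppsT D x y" using pps_data[OF fin assms(3)] by (simp add: a_def b_def)
  have S1: "\<forall>p\<in>ppsT D x y. fst (e 1) \<le> fst p"
  proof -
    obtain q where q: "q extreme_point_of ppsT D x y" "\<forall>p\<in>ppsT D x y. - fst p \<le> - fst q"
      using pps_max[OF fin ne, of "-1" 0 x y] by auto
    obtain j where j: "j \<in> {1..\<phi>}" "q = e j" using extE[OF q(1)] by blast
    have "fst (e 1) \<le> fst (e j)" using xlt[of 1 j] j by (cases "j = 1") auto
    thus ?thesis using q(2) j(2) by force
  qed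
  have S2: "\<forall>p\<in>ppsT D x y. snd p \<le> snd (e \<phi>)"
  proof -
    obtain q where q: "q extreme_point_of ppsT D x y" "\<forall>p\<in>ppsT D x y. snd p \<le> snd q"
      using pps_max[OF fin ne, of 0 1 x y] by auto
    obtain j where j: "j \<in> {1..\<phi>}" "q = e j" using extE[OF q(1)] by blast
    have "snd (e j) \<le> snd (e \<phi>)" using ylt[of j \<phi>] j by (cases "j = \<phi>") auto
    thus ?thesis using q(2) j(2) by force
  qed
  have S3: "\<And>k. 1 \<le> k \<Longrightarrow> k < \<phi> \<Longrightarrow> \<forall>p\<in>ppsT D x y.
       (fst (e (Suc k)) - fst (e k)) * snd p - (snd (e (Suc k)) - snd (e k)) * fst p
        \<le> (fst (e (Suc k)) - fst (e k)) * snd (e k) - (snd (e (Suc k)) - snd (e k)) * fst (e k)"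
    using seg_support[OF fin ne ext extE xlt ylt] by blast
  have LB: "\<forall>L\<in>frontier_lines e \<phi>. \<forall>\<sigma>. \<sigma> \<ge> 0 \<and> vpt a' b' \<sigma> \<in> L \<sigma> \<longrightarrow> zz \<le> \<sigma>"
    if p: "(a' - 2 * zz, b' + 2 * zz) \<in> ppsT D x y" for a' b' zz
    by (rule lb_all[OF S1 S2 _ p mono]) (rule S3; assumption)
  have c1: "\<forall>L\<in>frontier_lines e \<phi>. req_unc a b (EF_first (e 1)) \<le> req_unc a b L"
    if h: "b + a \<le> snd (e 1) + fst (e 1)"
  proof
    fix L assume L: "L \<in> frontier_lines e \<phi>"
    define \<sigma>0 where "\<sigma>0 = (a - fst (e 1)) / 2"
    have p0: "(a - 2*\<sigma>0, b + 2*\<sigma>0) \<in> ppsT D x y"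
    proof -
      have "fst (e 1) \<le> a - 2*\<sigma>0" "b + 2*\<sigma>0 \<le> snd (e 1)" using h by (simp_all add: \<sigma>0_def field_simps)
      moreover have "(fst (e 1), snd (e 1)) \<in> ppsT D x y" using eT[of 1] assms(4) by simp
      ultimately show ?thesis using pps_mono by blast
    qed
    show "req_unc a b (EF_first (e 1)) \<le> req_unc a b L"
    proof (rule req_le[of \<sigma>0])
      show "\<sigma>0 \<ge> 0" using S1 abT by (force simp: \<sigma>0_def)
      show "vpt a b \<sigma>0 \<in> EF_first (e 1) \<sigma>0" by (simp add: vpt_def EF_first_def \<sigma>0_def field_simps)
      show "\<sigma>0 \<le> \<sigma>" if "\<sigma> \<ge> 0" "vpt a b \<sigma> \<in> L \<sigma>" for \<sigma> using LB[OF p0] L that by blast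
    qed
  qed
  have c3: "\<forall>L\<in>frontier_lines e \<phi>. req_unc a b (EF_last (e \<phi>)) \<le> req_unc a b L"
    if h: "snd (e \<phi>) + fst (e \<phi>) \<le> b + a"
  proof
    fix L assume L: "L \<in> frontier_lines e \<phi>"
    define \<sigma>0 where "\<sigma>0 = (snd (e \<phi>) - b) / 2"
    have p0: "(a - 2*\<sigma>0, b + 2*\<sigma>0) \<in> ppsT D x y"
    proof -
      have "fst (e \<phi>) \<le> a - 2*\<sigma>0" "b + 2*\<sigma>0 \<le> snd (e \<phi>)" using h by (simp_all add: \<sigma>0_def field_simps)
      moreover have "(fst (e \<phi>), snd (e \<phi>)) \<in> ppsT D x y" using eT[of \<phi>] assms(4) by simp
      ultimately show ?thesis using pps_mono by blast
    qed
    show "req_unc a b (EF_last (e \<phi>)) \<le> req_unc a b L"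
    proof (rule req_le[of \<sigma>0])
      show "\<sigma>0 \<ge> 0" using S2 abT by (force simp: \<sigma>0_def)
      show "vpt a b \<sigma>0 \<in> EF_last (e \<phi>) \<sigma>0" by (simp add: vpt_def EF_last_def \<sigma>0_def field_simps)
      show "\<sigma>0 \<le> \<sigma>" if "\<sigma> \<ge> 0" "vpt a b \<sigma> \<in> L \<sigma>" for \<sigma> using LB[OF p0] L that by blast
    qed
  qed
  have c2: "\<forall>L\<in>frontier_lines e \<phi>. req_unc a b (EF_seg (e k) (e (Suc k))) \<le> req_unc a b L"
    if k: "1 \<le> k" "k < \<phi>" and h1: "snd (e k) + fst (e k) \<le> b + a"
      and h2: "b + a \<le> snd (e (Suc k)) + fst (e (Suc k))" for k
  proof
    fix L assume L: "L \<in> frontier_lines e \<phi>"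
    define P where "P = e k"
    define Q where "Q = e (Suc k)"
    have PQ: "fst P < fst Q" "snd P < snd Q" using mono k by (auto simp: P_def Q_def)
    define t where "t = (b + a - (snd P + fst P)) / ((snd Q + fst Q) - (snd P + fst P))"
    have t: "0 \<le> t" "t \<le> 1" using PQ h1 h2 by (auto simp: t_def P_def Q_def)
    define p0 where "p0 = (1 - t) *\<^sub>R P + t *\<^sub>R Q"
    have s0: "fst p0 + snd p0 = b + a"
    proof -
      have "fst p0 + snd p0 = (snd P + fst P) + t * ((snd Q + fst Q) - (snd P + fst P))"
        by (simp add: p0_def algebra_simps)
      also have "t * ((snd Q + fst Q) - (snd P + fst P)) = b + a - (snd P + fst P)"
        using PQ by (simp add: t_def)
      finally show ?thesis by simp
    qed
    define \<sigma>0 where "\<sigma>0 = (a - fst p0) / 2"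
    have p0eq: "p0 = (a - 2*\<sigma>0, b + 2*\<sigma>0)" using s0 by (simp add: \<sigma>0_def prod_eq_iff field_simps)
    have p0T: "p0 \<in> ppsT D x y" unfolding p0_def
      using pps_convex eT[of k] eT[of "Suc k"] k t by (intro convexD) (auto simp: P_def Q_def)
    have p0': "(a - 2*\<sigma>0, b + 2*\<sigma>0) \<in> ppsT D x y" using p0T p0eq by simp
    show "req_unc a b (EF_seg (e k) (e (Suc k))) \<le> req_unc a b L"
    proof (rule req_le[of \<sigma>0])
      define dx where "dx = fst Q - fst P"
      define dy where "dy = snd Q - snd P"
      have "dx * snd p0 - dy * fst p0 = dx * snd P - dy * fst P"
        by (simp add: p0_def dx_def dy_def algebra_simps)
      moreover have "dx * b - dy * a \<le> dx * snd P - dy * fst P"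
        using S3[OF k] abT by (force simp: dx_def dy_def P_def Q_def)
      ultimately have "dx * b - dy * a \<le> dx * (b + 2*\<sigma>0) - dy * (a - 2*\<sigma>0)" using p0eq by simp
      hence "0 \<le> \<sigma>0 * (dx + dy)" by (simp add: algebra_simps)
      moreover have "dx + dy > 0" using PQ by (simp add: dx_def dy_def)
      ultimately show "\<sigma>0 \<ge> 0" by (simp add: zero_le_mult_iff)
      have "vpt a b \<sigma>0 = (1 - t) *\<^sub>R shiftp \<sigma>0 P + t *\<^sub>R shiftp \<sigma>0 Q"
      proof -
        have "vpt a b \<sigma>0 = p0 + (\<sigma>0, - \<sigma>0)" using p0eq by (simp add: vpt_def)
        also have "\<dots> = (1 - t) *\<^sub>R shiftp \<sigma>0 P + t *\<^sub>R shiftp \<sigma>0 Q"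
          by (simp add: p0_def shiftp_def prod_eq_iff algebra_simps)
        finally show ?thesis .
      qed
      thus "vpt a b \<sigma>0 \<in> EF_seg (e k) (e (Suc k)) \<sigma>0"
        unfolding EF_seg_def affine_hull_2 P_def Q_def by force
      show "\<sigma>0 \<le> \<sigma>" if "\<sigma> \<ge> 0" "vpt a b \<sigma> \<in> L \<sigma>" for \<sigma> using LB[OF p0'] L that by blast
    qed
  qed
  show ?thesis using c1 c2 c3 unfolding a_def b_def by blast
qed

end
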